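(* Let $0<r\le1<R$ and define $f(t)=t^2$ for $|t|\le1$, $f(t)=|t|^r$ for $1<|t|\le R$, and $f(t)=\infty$ for $|t|>R$. Then for any $p\ge1$ and any $a_1\ge a_2\ge\dots\ge a_n\ge0$, the quantity $S=\sup\{\sum_ia_it_i:\sum_if(t_i)\le p\}$ satisfies, up to universal multiplicative constants, $$S\sim\begin{cases}\sqrt p\sqrt{\sum_ia_i^2}+p^{1/r}a_1 & 1\le p\le R^r,\\ \sqrt p\sqrt{\sum_ia_i^2}+R\sum_{i\le p/R^r}a_i & R^r<p\le R^2,\\ \sqrt p\sqrt{\sum_{i\ge p/R^2}a_i^2}+R\sum_{i\le p/R^r}a_i & R^2<p.\end{cases}$$
   Context: $A\sim B$ means $B/C\le A\le CB$ for a universal constant $C$. *)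

theory Defs
  imports "HOL-Analysis.Analysis"
begin

definition fA4 :: "real \<Rightarrow> real \<Rightarrow> real \<Rightarrow> ereal" where
  "fA4 r R t = (if \<bar>t\<bar> \<le> 1 then ereal (t^2)
               else if \<bar>t\<bar> \<le> R then ereal (\<bar>t\<bar> powr r) else \<infinity>)"

definition SA4 :: "real \<Rightarrow> real \<Rightarrow> real \<Rightarrow> nat \<Rightarrow> (nat \<Rightarrow> real) \<Rightarrow> real" where
  "SA4 r R p n a = Sup {(\<Sum>i=1..n. a i * t i) | t.
       (\<Sum>i=1..n. fA4 r R (t i)) \<le> ereal p}"

end

theory Submission imports Defs begin

definition gA :: "real \<Rightarrow> real \<Rightarrow> real" where
  "gA r t = (if \<bar>t\<bar> \<le> 1 then t^2 else \<bar>t\<bar> powr r)"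

definition ZA :: "real \<Rightarrow> real \<Rightarrow> real \<Rightarrow> nat \<Rightarrow> (nat \<Rightarrow> real) \<Rightarrow> real set" where
  "ZA r R p n a = {(\<Sum>i=1..n. a i * t i) | t.
     (\<forall>i\<in>{1..n}. \<bar>t i\<bar> \<le> R) \<and> (\<Sum>i=1..n. gA r (t i)) \<le> p}"

lemma ZA_I:
  assumes "\<forall>i\<in>{1..n}. \<bar>t i\<bar> \<le> R" "(\<Sum>i=1..n. gA r (t i)) \<le> p"
  shows "(\<Sum>i=1..n. a i * t i) \<in> ZA r R p n a"
  unfolding ZA_def using assms by blast

lemma gA_nonneg: "0 \<le> gA r t" by (simp add: gA_def)

lemma gA_le_sq: assumes "r \<le> 1" shows "gA r t \<le> t^2"
proof (cases "\<bar>t\<bar> \<le> 1")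
  case False
  have "\<bar>t\<bar> powr r \<le> \<bar>t\<bar> powr 1" using False assms by (intro powr_mono) auto
  also have "\<dots> = \<bar>t\<bar>" using False by simp
  also have "\<dots> = \<bar>t\<bar> * 1" by simp
  also have "\<dots> \<le> \<bar>t\<bar> * \<bar>t\<bar>" using False by (intro mult_left_mono) auto
  also have "\<dots> = t^2" by (simp add: power2_eq_square)
  finally show ?thesis using False by (simp add: gA_def)
qed (simp add: gA_def)

lemma constraint_iff:
  assumes "finite I" "1 \<le> R"
  shows "((\<Sum>i\<in>I. fA4 r R (t i)) \<le> ereal p) \<longleftrightarrow>
         ((\<forall>i\<in>I. \<bar>t i\<bar> \<le> R) \<and> (\<Sum>i\<in>I. gA r (t i)) \<le> p)"
proof (cases "\<forall>i\<in>I. \<bar>t i\<bar> \<le> R")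
  case True
  have "(\<Sum>i\<in>I. fA4 r R (t i)) = (\<Sum>i\<in>I. ereal (gA r (t i)))"
    using True assms(2) by (intro sum.cong) (auto simp: fA4_def gA_def)
  then show ?thesis using True by simp
next
  case False
  then obtain j where j: "j \<in> I" "\<bar>t j\<bar> > R" by auto
  have "fA4 r R (t j) = \<infinity>" using j assms(2) by (simp add: fA4_def)
  then have "(\<Sum>i\<in>I. fA4 r R (t i)) = \<infinity>" using j assms(1) by (subst sum_Pinfty) auto
  then show ?thesis using False by simp
qed


lemma powr_split_bound:
  fixes t q r :: real
  assumes "0 < r" "r \<le> 1" "0 < t" "t powr r \<le> q"
  shows "t \<le> q powr ((1-r)/r) * t powr r"
proof -
  have e1: "t powr (1-r) * t powr r = t powr ((1-r) + r)" by (rule powr_add[symmetric])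
  have e2: "t powr ((1-r) + r) = t" using assms(3) by simp
  have e3: "(t powr r) powr ((1-r)/r) = t powr (r * ((1-r)/r))" by (rule powr_powr)
  have e4: "r * ((1-r)/r) = 1 - r" using assms(1) by simp
  have m: "(t powr r) powr ((1-r)/r) \<le> q powr ((1-r)/r)"
    using assms by (intro powr_mono2) auto
  have "t = t powr (1-r) * t powr r" using e1 e2 by simp
  also have "\<dots> \<le> q powr ((1-r)/r) * t powr r"
    using m e3 e4 by (intro mult_right_mono) auto
  finally show ?thesis .
qed

lemma cs_sub:
  fixes a t :: "nat \<Rightarrow> real"
  assumes "finite J" "K \<subseteq> J" "\<forall>i\<in>K. 0 \<le> a i"
  shows "(\<Sum>i\<in>K. a i * \<bar>t i\<bar>) \<le> sqrt (\<Sum>i\<in>J. (a i)^2) * sqrt (\<Sum>i\<in>K. (t i)^2)"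
proof -
  have "(\<Sum>i\<in>K. a i * \<bar>t i\<bar>) = (\<Sum>i\<in>K. \<bar>a i\<bar> * \<bar>t i\<bar>)" using assms(3) by (intro sum.cong) auto
  also have "\<dots> \<le> L2_set a K * L2_set t K" by (rule L2_set_mult_ineq)
  also have "\<dots> \<le> sqrt (\<Sum>i\<in>J. (a i)^2) * sqrt (\<Sum>i\<in>K. (t i)^2)"
    unfolding L2_set_def
    by (intro mult_right_mono real_sqrt_le_mono sum_mono2 assms) (auto intro: sum_nonneg)
  finally show ?thesis .
qed

context
  fixes r R p :: real and n :: nat and a :: "nat \<Rightarrow> real"
  assumes r0: "0 < r" and r1: "r \<le> 1" and R1: "1 < R" and p1: "1 \<le> p" and n1: "1 \<le> n"
    and mono: "\<forall>i j. 1 \<le> i \<longrightarrow> i \<le> j \<longrightarrow> j \<le> n \<longrightarrow> a j \<le> a i" and an: "0 \<le> a n"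
begin

lemma a_le: "1 \<le> i \<Longrightarrow> i \<le> j \<Longrightarrow> j \<le> n \<Longrightarrow> a j \<le> a i" using mono by blast

lemma a_nonneg: "i \<in> {1..n} \<Longrightarrow> 0 \<le> a i"
  using a_le[of i n] an by auto

lemma split_parts:
  assumes v1: "\<forall>i\<in>{1..n}. \<bar>t i\<bar> \<le> R" and v2: "(\<Sum>i=1..n. gA r (t i)) \<le> p"
  shows "(\<Sum>i=1..n. a i * t i) \<le> (\<Sum>i\<in>{i\<in>{1..n}. \<bar>t i\<bar> \<le> 1}. a i * \<bar>t i\<bar>)
            + (\<Sum>i\<in>{i\<in>{1..n}. 1 < \<bar>t i\<bar>}. a i * \<bar>t i\<bar>)"
    and "(\<Sum>i\<in>{i\<in>{1..n}. \<bar>t i\<bar> \<le> 1}. (t i)^2) \<le> p"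
    and "(\<Sum>i\<in>{i\<in>{1..n}. 1 < \<bar>t i\<bar>}. \<bar>t i\<bar> powr r) \<le> p"
proof -
  define Sm where "Sm = {i\<in>{1..n}. \<bar>t i\<bar> \<le> 1}"
  define Bg where "Bg = {i\<in>{1..n}. 1 < \<bar>t i\<bar>}"
  have U: "{1..n} = Sm \<union> Bg" and D: "Sm \<inter> Bg = {}" and fS: "finite Sm" and fB: "finite Bg"
    by (auto simp: Sm_def Bg_def)
  have "(\<Sum>i=1..n. a i * t i) \<le> (\<Sum>i=1..n. a i * \<bar>t i\<bar>)"
    using a_nonneg by (intro sum_mono mult_left_mono) auto
  also have "\<dots> = (\<Sum>i\<in>Sm. a i * \<bar>t i\<bar>) + (\<Sum>i\<in>Bg. a i * \<bar>t i\<bar>)"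
    by (subst U, rule sum.union_disjoint[OF fS fB D])
  finally show "(\<Sum>i=1..n. a i * t i) \<le> (\<Sum>i\<in>{i\<in>{1..n}. \<bar>t i\<bar> \<le> 1}. a i * \<bar>t i\<bar>)
            + (\<Sum>i\<in>{i\<in>{1..n}. 1 < \<bar>t i\<bar>}. a i * \<bar>t i\<bar>)" by (simp add: Sm_def Bg_def)
  have "(\<Sum>i=1..n. gA r (t i)) = (\<Sum>i\<in>Sm. gA r (t i)) + (\<Sum>i\<in>Bg. gA r (t i))"
    by (subst U, rule sum.union_disjoint[OF fS fB D])
  also have "(\<Sum>i\<in>Sm. gA r (t i)) = (\<Sum>i\<in>Sm. (t i)^2)" by (intro sum.cong) (auto simp: Sm_def gA_def)
  also have "(\<Sum>i\<in>Bg. gA r (t i)) = (\<Sum>i\<in>Bg. \<bar>t i\<bar> powr r)" by (intro sum.cong) (auto simp: Bg_def gA_def)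
  finally have E: "(\<Sum>i\<in>Sm. (t i)^2) + (\<Sum>i\<in>Bg. \<bar>t i\<bar> powr r) \<le> p" using v2 by simp
  have "0 \<le> (\<Sum>i\<in>Sm. (t i)^2)" "0 \<le> (\<Sum>i\<in>Bg. \<bar>t i\<bar> powr r)" by (auto intro: sum_nonneg)
  then show "(\<Sum>i\<in>{i\<in>{1..n}. \<bar>t i\<bar> \<le> 1}. (t i)^2) \<le> p"
    and "(\<Sum>i\<in>{i\<in>{1..n}. 1 < \<bar>t i\<bar>}. \<bar>t i\<bar> powr r) \<le> p"
    using E by (simp_all add: Sm_def Bg_def)
qed

lemma big1:
  assumes "\<forall>i\<in>B. 1 < \<bar>t i\<bar>" "(\<Sum>i\<in>B. \<bar>t i\<bar> powr r) \<le> p" "B \<subseteq> {1..n}"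
  shows "(\<Sum>i\<in>B. a i * \<bar>t i\<bar>) \<le> p powr (1/r) * a 1"
proof -
  have fB: "finite B" using assms(3) finite_subset by blast
  have "(\<Sum>i\<in>B. a i * \<bar>t i\<bar>) \<le> (\<Sum>i\<in>B. a 1 * (p powr ((1-r)/r) * \<bar>t i\<bar> powr r))"
  proof (intro sum_mono)
    fix i assume i: "i \<in> B"
    have w: "\<bar>t i\<bar> powr r \<le> p"
      using member_le_sum[OF i, of "\<lambda>i. \<bar>t i\<bar> powr r"] fB assms(2) by auto
    have "\<bar>t i\<bar> \<le> p powr ((1-r)/r) * \<bar>t i\<bar> powr r"
      using powr_split_bound[OF r0 r1 _ w] assms(1) i by auto
    moreover have "0 \<le> a i" "a i \<le> a 1" using i assms(3) a_nonneg a_le[of 1 i] by auto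
    ultimately show "a i * \<bar>t i\<bar> \<le> a 1 * (p powr ((1-r)/r) * \<bar>t i\<bar> powr r)"
      using mult_mono[of "a i" "a 1" "\<bar>t i\<bar>" "p powr ((1-r)/r) * \<bar>t i\<bar> powr r"] by auto
  qed
  also have "\<dots> = a 1 * p powr ((1-r)/r) * (\<Sum>i\<in>B. \<bar>t i\<bar> powr r)"
    by (simp add: sum_distrib_left mult.assoc)
  also have "\<dots> \<le> a 1 * p powr ((1-r)/r) * p"
    using assms(2) a_nonneg[of 1] n1 by (intro mult_left_mono) auto
  also have "\<dots> = a 1 * p powr (1/r)"
  proof -
    have "p powr ((1-r)/r) * p = p powr ((1-r)/r + 1)" using p1 by (simp only: powr_add powr_one)
    also have "(1-r)/r + 1 = 1/r" using r0 by (simp add: field_simps)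
    finally show ?thesis by (simp add: mult.assoc)
  qed
  finally show ?thesis by (simp add: mult.commute)
qed


lemma head_ge:
  assumes "1 \<le> k" "real k \<le> x" "k \<le> n"
  shows "(\<Sum>j=1..k. a j) \<le> (\<Sum>i\<in>{i\<in>{1..n}. real i \<le> x}. a i)"
  using assms a_nonneg by (intro sum_mono2) auto

lemma big2:
  assumes Rp: "R powr r < p" and B1: "\<forall>i\<in>B. 1 < \<bar>t i\<bar> \<and> \<bar>t i\<bar> \<le> R"
    and B2: "(\<Sum>i\<in>B. \<bar>t i\<bar> powr r) \<le> p" and B3: "B \<subseteq> {1..n}"
  shows "(\<Sum>i\<in>B. a i * \<bar>t i\<bar>) \<le> 3 * R * (\<Sum>i\<in>{i\<in>{1..n}. real i \<le> p / R powr r}. a i)"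
proof -
  define x where "x = p / R powr r"
  define hs where "hs = (\<Sum>i\<in>{i\<in>{1..n}. real i \<le> x}. a i)"
  define k where "k = nat \<lfloor>x\<rfloor>"
  define Rr where "Rr = R powr r"
  have Rr0: "0 < Rr" using R1 by (simp add: Rr_def)
  have x1: "1 < x" using Rp Rr0 by (simp add: x_def Rr_def[symmetric] field_simps)
  have fl1: "(1::int) \<le> \<lfloor>x\<rfloor>" using x1 by (simp add: le_floor_iff)
  have k1: "1 \<le> k" using fl1 unfolding k_def by linarith
  have kx: "real k \<le> x" using x1 by (simp add: k_def)
  have xk: "x < real k + 1" using x1 by (simp add: k_def)
  have x2k: "x \<le> 2 * real k" using xk k1 by linarith
  have hs0: "0 \<le> hs" unfolding hs_def using a_nonneg by (intro sum_nonneg) auto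
  have fB: "finite B" using B3 finite_subset by blast
  have w0: "\<And>i. 0 \<le> \<bar>t i\<bar> powr r" by simp
  have tail: "a i \<le> hs / real k" if i: "i \<in> {1..n}" "x < real i" for i
  proof -
    have kn: "k \<le> n" using i kx by auto
    have "real k * a i = (\<Sum>j=1..k. a i)" by simp
    also have "\<dots> \<le> (\<Sum>j=1..k. a j)" using i kx by (intro sum_mono a_le) auto
    also have "\<dots> \<le> hs" unfolding hs_def by (rule head_ge[OF k1 kx kn])
    finally show ?thesis using k1 by (simp add: field_simps)
  qed
  define Bl where "Bl = {i\<in>B. real i \<le> x}"
  define Bh where "Bh = {i\<in>B. \<not> real i \<le> x}"
  have fBl: "finite Bl" and fBh: "finite Bh" using fB by (auto simp: Bl_def Bh_def)
  have UB: "B = Bl \<union> Bh" and DB: "Bl \<inter> Bh = {}" by (auto simp: Bl_def Bh_def)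
  have s1: "(\<Sum>i\<in>Bl. a i * \<bar>t i\<bar> powr r) \<le> Rr * hs"
  proof -
    have "(\<Sum>i\<in>Bl. a i * \<bar>t i\<bar> powr r) \<le> (\<Sum>i\<in>Bl. Rr * a i)"
    proof (intro sum_mono)
      fix i assume i: "i \<in> Bl"
      have "\<bar>t i\<bar> powr r \<le> Rr" unfolding Rr_def using i B1 r0 by (intro powr_mono2) (auto simp: Bl_def)
      moreover have "0 \<le> a i" using i B3 a_nonneg by (auto simp: Bl_def)
      ultimately show "a i * \<bar>t i\<bar> powr r \<le> Rr * a i" by (metis mult.commute mult_left_mono)
    qed
    also have "\<dots> = Rr * (\<Sum>i\<in>Bl. a i)" by (simp add: sum_distrib_left)
    also have "(\<Sum>i\<in>Bl. a i) \<le> hs" unfolding hs_def using B3 a_nonneg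
      by (intro sum_mono2) (auto simp: Bl_def)
    then have "Rr * (\<Sum>i\<in>Bl. a i) \<le> Rr * hs" using Rr0 by simp
    finally show ?thesis .
  qed
  have s2: "(\<Sum>i\<in>Bh. a i * \<bar>t i\<bar> powr r) \<le> 2 * Rr * hs"
  proof -
    have "(\<Sum>i\<in>Bh. a i * \<bar>t i\<bar> powr r) \<le> (\<Sum>i\<in>Bh. hs / real k * \<bar>t i\<bar> powr r)"
    proof (intro sum_mono mult_right_mono)
      fix i assume i: "i \<in> Bh"
      then show "a i \<le> hs / real k" using B3 by (intro tail) (auto simp: Bh_def)
    qed simp
    also have "\<dots> = hs / real k * (\<Sum>i\<in>Bh. \<bar>t i\<bar> powr r)" by (simp add: sum_distrib_left)
    also have "(\<Sum>i\<in>Bh. \<bar>t i\<bar> powr r) \<le> p"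
    proof -
      have "(\<Sum>i\<in>Bh. \<bar>t i\<bar> powr r) \<le> (\<Sum>i\<in>B. \<bar>t i\<bar> powr r)"
        using fB by (intro sum_mono2) (auto simp: Bh_def)
      then show ?thesis using B2 by simp
    qed
    then have "hs / real k * (\<Sum>i\<in>Bh. \<bar>t i\<bar> powr r) \<le> hs / real k * p"
      using hs0 k1 by (intro mult_left_mono) auto
    also have "hs / real k * p = hs * (x / real k) * Rr"
      using Rr0 by (simp add: x_def Rr_def[symmetric] field_simps)
    also have "\<dots> \<le> hs * 2 * Rr"
    proof -
      have "x / real k \<le> 2" using x2k k1 by (simp add: field_simps)
      then show ?thesis using hs0 Rr0 mult_left_mono[of "x / real k" 2 hs] by (intro mult_right_mono) auto
    qed
    finally show ?thesis by (simp add: mult_ac)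
  qed
  have "(\<Sum>i\<in>B. a i * \<bar>t i\<bar>) \<le> (\<Sum>i\<in>B. R powr (1-r) * (a i * \<bar>t i\<bar> powr r))"
  proof (intro sum_mono)
    fix i assume i: "i \<in> B"
    have "\<bar>t i\<bar> \<le> R powr (1-r) * \<bar>t i\<bar> powr r"
    proof -
      have "\<bar>t i\<bar> = \<bar>t i\<bar> powr ((1-r) + r)" using i B1 by simp
      also have "\<dots> = \<bar>t i\<bar> powr (1-r) * \<bar>t i\<bar> powr r" by (rule powr_add)
      also have "\<bar>t i\<bar> powr (1-r) \<le> R powr (1-r)" using i B1 r1 by (intro powr_mono2) auto
      then have "\<bar>t i\<bar> powr (1-r) * \<bar>t i\<bar> powr r \<le> R powr (1-r) * \<bar>t i\<bar> powr r"
        by (intro mult_right_mono) auto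
      finally show ?thesis .
    qed
    moreover have "0 \<le> a i" using i B3 a_nonneg by auto
    ultimately show "a i * \<bar>t i\<bar> \<le> R powr (1-r) * (a i * \<bar>t i\<bar> powr r)"
      using mult_left_mono[of "\<bar>t i\<bar>" "R powr (1-r) * \<bar>t i\<bar> powr r" "a i"] by (simp add: mult_ac)
  qed
  also have "\<dots> = R powr (1-r) * (\<Sum>i\<in>B. a i * \<bar>t i\<bar> powr r)" by (simp add: sum_distrib_left)
  also have "(\<Sum>i\<in>B. a i * \<bar>t i\<bar> powr r) = (\<Sum>i\<in>Bl. a i * \<bar>t i\<bar> powr r) + (\<Sum>i\<in>Bh. a i * \<bar>t i\<bar> powr r)"
    by (subst UB, rule sum.union_disjoint[OF fBl fBh DB])
  also have "\<dots> \<le> 3 * Rr * hs" using s1 s2 by simp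
  also have "R powr (1-r) * (3 * Rr * hs) = 3 * R * hs"
  proof -
    have "R powr (1-r) * Rr = R powr ((1-r) + r)" unfolding Rr_def by (rule powr_add[symmetric])
    also have "\<dots> = R" using R1 by simp
    finally show ?thesis by (simp add: mult_ac)
  qed
  finally show ?thesis using R1 by (simp add: hs_def x_def mult_left_mono)
qed


lemma small_all:
  assumes "(\<Sum>i\<in>{i\<in>{1..n}. \<bar>t i\<bar> \<le> 1}. (t i)^2) \<le> p"
  shows "(\<Sum>i\<in>{i\<in>{1..n}. \<bar>t i\<bar> \<le> 1}. a i * \<bar>t i\<bar>) \<le> sqrt p * sqrt (\<Sum>i=1..n. (a i)^2)"
proof -
  have "(\<Sum>i\<in>{i\<in>{1..n}. \<bar>t i\<bar> \<le> 1}. a i * \<bar>t i\<bar>)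
      \<le> sqrt (\<Sum>i=1..n. (a i)^2) * sqrt (\<Sum>i\<in>{i\<in>{1..n}. \<bar>t i\<bar> \<le> 1}. (t i)^2)"
    using a_nonneg by (intro cs_sub) auto
  also have "\<dots> \<le> sqrt (\<Sum>i=1..n. (a i)^2) * sqrt p"
    using assms by (intro mult_left_mono) (auto intro: sum_nonneg)
  finally show ?thesis by (simp add: mult.commute)
qed

lemma Rr_le_R2: "R powr r \<le> R^2"
proof -
  have "R powr r \<le> R powr 2" using R1 r1 by (intro powr_mono) auto
  also have "R powr 2 = R^2" using R1 by (simp add: powr_numeral)
  finally show ?thesis .
qed

lemma upper1:
  assumes v1: "\<forall>i\<in>{1..n}. \<bar>t i\<bar> \<le> R" and v2: "(\<Sum>i=1..n. gA r (t i)) \<le> p"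
  shows "(\<Sum>i=1..n. a i * t i) \<le> sqrt p * sqrt (\<Sum>i=1..n. (a i)^2) + p powr (1/r) * a 1"
proof -
  note sp = split_parts[OF v1 v2]
  have "(\<Sum>i\<in>{i\<in>{1..n}. 1 < \<bar>t i\<bar>}. a i * \<bar>t i\<bar>) \<le> p powr (1/r) * a 1"
    using sp(3) by (intro big1) auto
  then show ?thesis using sp(1) small_all[OF sp(2)] by linarith
qed

lemma upper2:
  assumes Rp: "R powr r < p" and v1: "\<forall>i\<in>{1..n}. \<bar>t i\<bar> \<le> R" and v2: "(\<Sum>i=1..n. gA r (t i)) \<le> p"
  shows "(\<Sum>i=1..n. a i * t i) \<le> sqrt p * sqrt (\<Sum>i=1..n. (a i)^2)
            + 3 * R * (\<Sum>i\<in>{i\<in>{1..n}. real i \<le> p / R powr r}. a i)"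
proof -
  note sp = split_parts[OF v1 v2]
  have "(\<Sum>i\<in>{i\<in>{1..n}. 1 < \<bar>t i\<bar>}. a i * \<bar>t i\<bar>) \<le> 3 * R * (\<Sum>i\<in>{i\<in>{1..n}. real i \<le> p / R powr r}. a i)"
    using sp(3) v1 by (intro big2[OF Rp]) auto
  then show ?thesis using sp(1) small_all[OF sp(2)] by linarith
qed

lemma upper3:
  assumes Rp: "R^2 < p" and v1: "\<forall>i\<in>{1..n}. \<bar>t i\<bar> \<le> R" and v2: "(\<Sum>i=1..n. gA r (t i)) \<le> p"
  shows "(\<Sum>i=1..n. a i * t i) \<le> sqrt p * sqrt (\<Sum>i\<in>{i\<in>{1..n}. p / R^2 \<le> real i}. (a i)^2)
            + 4 * R * (\<Sum>i\<in>{i\<in>{1..n}. real i \<le> p / R powr r}. a i)"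
proof -
  define hs where "hs = (\<Sum>i\<in>{i\<in>{1..n}. real i \<le> p / R powr r}. a i)"
  define T where "T = {i\<in>{1..n}. p / R^2 \<le> real i}"
  note sp = split_parts[OF v1 v2]
  have Rp': "R powr r < p" using Rp Rr_le_R2 by linarith
  have hs0: "0 \<le> hs" unfolding hs_def using a_nonneg by (intro sum_nonneg) auto
  have big: "(\<Sum>i\<in>{i\<in>{1..n}. 1 < \<bar>t i\<bar>}. a i * \<bar>t i\<bar>) \<le> 3 * R * hs"
    unfolding hs_def using sp(3) v1 by (intro big2[OF Rp']) auto
  define Sm where "Sm = {i\<in>{1..n}. \<bar>t i\<bar> \<le> 1}"
  define St where "St = {i\<in>Sm. p / R^2 \<le> real i}"
  define Sh where "Sh = {i\<in>Sm. \<not> p / R^2 \<le> real i}"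
  have fSt: "finite St" and fSh: "finite Sh" by (auto simp: St_def Sh_def Sm_def)
  have USm: "Sm = St \<union> Sh" and DSm: "St \<inter> Sh = {}" by (auto simp: St_def Sh_def)
  have "(\<Sum>i\<in>Sm. a i * \<bar>t i\<bar>) = (\<Sum>i\<in>St. a i * \<bar>t i\<bar>) + (\<Sum>i\<in>Sh. a i * \<bar>t i\<bar>)"
    by (subst USm, rule sum.union_disjoint[OF fSt fSh DSm])
  moreover have "(\<Sum>i\<in>St. a i * \<bar>t i\<bar>) \<le> sqrt p * sqrt (\<Sum>i\<in>T. (a i)^2)"
  proof -
    have "(\<Sum>i\<in>St. a i * \<bar>t i\<bar>) \<le> sqrt (\<Sum>i\<in>T. (a i)^2) * sqrt (\<Sum>i\<in>St. (t i)^2)"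
      using a_nonneg by (intro cs_sub) (auto simp: T_def St_def Sm_def)
    also have "(\<Sum>i\<in>St. (t i)^2) \<le> (\<Sum>i\<in>Sm. (t i)^2)"
      by (intro sum_mono2) (auto simp: St_def Sm_def)
    then have "sqrt (\<Sum>i\<in>T. (a i)^2) * sqrt (\<Sum>i\<in>St. (t i)^2) \<le> sqrt (\<Sum>i\<in>T. (a i)^2) * sqrt p"
      using sp(2) by (intro mult_left_mono) (auto simp: Sm_def intro: sum_nonneg)
    finally show ?thesis by (simp add: mult.commute)
  qed
  moreover have "(\<Sum>i\<in>Sh. a i * \<bar>t i\<bar>) \<le> hs"
  proof -
    have "(\<Sum>i\<in>Sh. a i * \<bar>t i\<bar>) \<le> (\<Sum>i\<in>Sh. a i)"
      using a_nonneg by (intro sum_mono mult_right_le_one_le) (auto simp: Sh_def Sm_def)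
    also have "\<dots> \<le> hs" unfolding hs_def
    proof (intro sum_mono2)
      show "Sh \<subseteq> {i\<in>{1..n}. real i \<le> p / R powr r}"
      proof
        fix i assume i: "i \<in> Sh"
        have "p / R^2 \<le> p / R powr r" using Rr_le_R2 R1 p1 by (intro divide_left_mono) auto
        then show "i \<in> {i\<in>{1..n}. real i \<le> p / R powr r}" using i by (auto simp: Sh_def Sm_def)
      qed
    qed (use a_nonneg in auto)
    finally show ?thesis .
  qed
  ultimately have "(\<Sum>i\<in>Sm. a i * \<bar>t i\<bar>) \<le> sqrt p * sqrt (\<Sum>i\<in>T. (a i)^2) + R * hs"
    using hs0 R1 mult_right_mono[of 1 R hs] by linarith
  then show ?thesis using sp(1) big unfolding T_def hs_def Sm_def by linarith
qed


lemma W0: "0 \<in> ZA r R p n a"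
  unfolding ZA_def using R1 p1 by (auto simp: gA_def intro!: exI[of _ "\<lambda>_. 0"])

lemma W1:
  assumes "p \<le> R powr r"
  shows "p powr (1/r) * a 1 \<in> ZA r R p n a"
proof -
  define q where "q = p powr (1/r)"
  define t where "t = (\<lambda>i::nat. if i = 1 then q else 0)"
  have q1: "1 \<le> q" unfolding q_def using p1 r0 by (simp add: ge_one_powr_ge_zero)
  have qR: "q \<le> R"
  proof -
    have "q \<le> (R powr r) powr (1/r)" unfolding q_def using assms p1 r0 by (intro powr_mono2) auto
    also have "\<dots> = R" using r0 R1 by (simp add: powr_powr)
    finally show ?thesis .
  qed
  have gq: "gA r q \<le> p"
  proof (cases "q \<le> 1")
    case True then have "q = 1" using q1 by simp
    then show ?thesis using p1 by (simp add: gA_def)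
  next
    case False
    then have "gA r q = q powr r" using q1 by (simp add: gA_def)
    also have "\<dots> = p" unfolding q_def using r0 p1 by (simp add: powr_powr)
    finally show ?thesis by simp
  qed
  have n1': "1 \<in> {1..n}" using n1 by simp
  have "(\<Sum>i=1..n. a i * t i) = (\<Sum>i=1..n. if i = 1 then a 1 * q else 0)"
    by (intro sum.cong) (auto simp: t_def)
  also have "\<dots> = a 1 * q" using n1' by (simp add: sum.delta)
  finally have s: "(\<Sum>i=1..n. a i * t i) = p powr (1/r) * a 1" by (simp add: q_def mult.commute)
  have "(\<Sum>i=1..n. gA r (t i)) = (\<Sum>i=1..n. if i = 1 then gA r q else 0)"
    by (intro sum.cong) (auto simp: t_def gA_def)
  also have "\<dots> = gA r q" using n1' by (simp add: sum.delta)
  finally have g: "(\<Sum>i=1..n. gA r (t i)) \<le> p" using gq by simp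
  have b: "\<forall>i\<in>{1..n}. \<bar>t i\<bar> \<le> R" using qR q1 R1 by (auto simp: t_def)
  show ?thesis by (subst s[symmetric]) (rule ZA_I[OF b g])
qed

lemma Wgen:
  assumes J: "J \<subseteq> {1..n}" and c0: "0 \<le> c" and cR: "\<forall>i\<in>J. c * a i \<le> R"
    and cp: "c^2 * (\<Sum>i\<in>J. (a i)^2) \<le> p"
  shows "c * (\<Sum>i\<in>J. (a i)^2) \<in> ZA r R p n a"
proof -
  define t where "t = (\<lambda>i. if i \<in> J then c * a i else 0)"
  have fin: "finite {1..n}" by simp
  have "(\<Sum>i=1..n. a i * t i) = (\<Sum>i=1..n. if i \<in> J then c * (a i)^2 else 0)"
    by (intro sum.cong) (auto simp: t_def power2_eq_square)
  also have "\<dots> = (\<Sum>i\<in>{1..n} \<inter> J. c * (a i)^2)" by (rule sum.inter_restrict[OF fin, symmetric])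
  also have "{1..n} \<inter> J = J" using J by auto
  finally have s: "(\<Sum>i=1..n. a i * t i) = c * (\<Sum>i\<in>J. (a i)^2)" by (simp add: sum_distrib_left)
  have "(\<Sum>i=1..n. gA r (t i)) \<le> (\<Sum>i=1..n. (t i)^2)"
    using r1 by (intro sum_mono gA_le_sq)
  also have "\<dots> = (\<Sum>i=1..n. if i \<in> J then c^2 * (a i)^2 else 0)"
    by (intro sum.cong) (auto simp: t_def power_mult_distrib)
  also have "\<dots> = (\<Sum>i\<in>{1..n} \<inter> J. c^2 * (a i)^2)" by (rule sum.inter_restrict[OF fin, symmetric])
  also have "{1..n} \<inter> J = J" using J by auto
  finally have g: "(\<Sum>i=1..n. gA r (t i)) \<le> p" using cp by (simp add: sum_distrib_left)
  have b: "\<forall>i\<in>{1..n}. \<bar>t i\<bar> \<le> R"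
  proof
    fix i assume i: "i \<in> {1..n}"
    show "\<bar>t i\<bar> \<le> R"
    proof (cases "i \<in> J")
      case True
      then have "0 \<le> a i" using J a_nonneg by auto
      then show ?thesis using True cR c0 by (simp add: t_def abs_mult)
    qed (use R1 in \<open>simp add: t_def\<close>)
  qed
  show ?thesis by (subst s[symmetric]) (rule ZA_I[OF b g])
qed

lemma W3: "R * (\<Sum>i\<in>{i\<in>{1..n}. real i \<le> p / R powr r}. a i) \<in> ZA r R p n a"
proof -
  define x where "x = p / R powr r"
  define H where "H = {i\<in>{1..n}. real i \<le> x}"
  define t where "t = (\<lambda>i::nat. if real i \<le> x then R else 0)"
  have fin: "finite {1..n}" by simp
  have Rr0: "0 < R powr r" using R1 by simp
  have x0: "0 \<le> x" using p1 Rr0 unfolding x_def by simp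
  have "(\<Sum>i=1..n. a i * t i) = (\<Sum>i=1..n. if real i \<le> x then R * a i else 0)"
    by (intro sum.cong) (auto simp: t_def)
  also have "\<dots> = (\<Sum>i\<in>H. R * a i)" unfolding H_def by (rule sum.inter_filter[OF fin, symmetric])
  also have "\<dots> = R * (\<Sum>i\<in>H. a i)" by (rule sum_distrib_left[symmetric])
  finally have s: "(\<Sum>i=1..n. a i * t i) = R * (\<Sum>i\<in>{i\<in>{1..n}. real i \<le> p / R powr r}. a i)"
    unfolding H_def x_def .
  have gR: "gA r R = R powr r" using R1 by (simp add: gA_def)
  have g0: "gA r 0 = 0" by (simp add: gA_def)
  have "(\<Sum>i=1..n. gA r (t i)) = (\<Sum>i=1..n. if real i \<le> x then R powr r else 0)"
    by (intro sum.cong) (simp_all add: t_def gR g0)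
  also have "\<dots> = (\<Sum>i\<in>H. R powr r)" unfolding H_def by (rule sum.inter_filter[OF fin, symmetric])
  also have "\<dots> = real (card H) * R powr r" by simp
  also have "\<dots> \<le> x * R powr r"
  proof -
    have "H \<subseteq> {1..nat \<lfloor>x\<rfloor>}"
    proof
      fix i assume "i \<in> H"
      then have "real i \<le> x" "1 \<le> i" by (auto simp: H_def)
      then show "i \<in> {1..nat \<lfloor>x\<rfloor>}" by (simp add: le_nat_floor)
    qed
    then have "card H \<le> nat \<lfloor>x\<rfloor>" using card_mono[of "{1..nat \<lfloor>x\<rfloor>}" H] by simp
    then have "real (card H) \<le> real (nat \<lfloor>x\<rfloor>)" by simp
    also have "\<dots> \<le> x" using x0 by linarith
    finally show ?thesis using Rr0 by (intro mult_right_mono) auto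
  qed
  also have "\<dots> = p" using Rr0 unfolding x_def by simp
  finally have g: "(\<Sum>i=1..n. gA r (t i)) \<le> p" .
  have b: "\<forall>i\<in>{1..n}. \<bar>t i\<bar> \<le> R" using R1 by (auto simp: t_def)
  show ?thesis by (subst s[symmetric]) (rule ZA_I[OF b g])
qed

lemma W2gen:
  assumes J: "J \<subseteq> {1..n}" and H: "\<forall>i\<in>J. sqrt p * a i \<le> R * sqrt (\<Sum>i\<in>J. (a i)^2)"
  shows "\<exists>z\<in>ZA r R p n a. sqrt p * sqrt (\<Sum>i\<in>J. (a i)^2) \<le> z"
proof -
  define Q where "Q = (\<Sum>i\<in>J. (a i)^2)"
  have Q0: "0 \<le> Q" unfolding Q_def by (intro sum_nonneg) auto
  show ?thesis
  proof (cases "Q = 0")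
    case True
    then show ?thesis using W0 unfolding Q_def by force
  next
    case False
    then have Qp: "0 < Q" using Q0 by simp
    then have sQ: "0 < sqrt Q" by simp
    define c where "c = sqrt p / sqrt Q"
    have c0: "0 \<le> c" unfolding c_def using sQ p1 by simp
    have cR: "\<forall>i\<in>J. c * a i \<le> R"
    proof
      fix i assume "i \<in> J"
      then have "sqrt p * a i \<le> R * sqrt Q" using H unfolding Q_def by blast
      then show "c * a i \<le> R" unfolding c_def using sQ by (simp add: field_simps)
    qed
    have sqQ: "sqrt Q * sqrt Q = Q" using Q0 by simp
    have sqp: "sqrt p * sqrt p = p" using p1 by simp
    have cp: "c^2 * Q = p" unfolding c_def using sQ sqQ sqp
      by (simp add: power2_eq_square field_simps)
    have cv: "c * Q = sqrt p * sqrt Q" unfolding c_def using sQ sqQ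
      by (simp add: field_simps)
    have "c * Q \<in> ZA r R p n a" unfolding Q_def
      by (rule Wgen[OF J c0 cR]) (use cp in \<open>simp add: Q_def\<close>)
    then show ?thesis using cv unfolding Q_def by force
  qed
qed

lemma W2:
  assumes "p \<le> R^2"
  shows "\<exists>z\<in>ZA r R p n a. sqrt p * sqrt (\<Sum>i=1..n. (a i)^2) \<le> z"
proof (rule W2gen)
  show "\<forall>i\<in>{1..n}. sqrt p * a i \<le> R * sqrt (\<Sum>i=1..n. (a i)^2)"
  proof
    fix i assume i: "i \<in> {1..n}"
    have "(a i)^2 \<le> (\<Sum>i=1..n. (a i)^2)"
      using member_le_sum[OF i, of "\<lambda>i. (a i)^2"] by simp
    then have ai: "a i \<le> sqrt (\<Sum>i=1..n. (a i)^2)" by (rule real_le_rsqrt)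
    have sp: "sqrt p \<le> R" using assms R1 real_sqrt_le_mono[OF assms] by simp
    show "sqrt p * a i \<le> R * sqrt (\<Sum>i=1..n. (a i)^2)"
      using ai sp a_nonneg[OF i] R1 by (intro mult_mono) auto
  qed
qed simp

lemma W4:
  assumes Rp: "R^2 < p"
  shows "sqrt p * sqrt (\<Sum>i\<in>{i\<in>{1..n}. p / R^2 \<le> real i}. (a i)^2)
           \<le> 2 * R * (\<Sum>i\<in>{i\<in>{1..n}. real i \<le> p / R powr r}. a i)
         \<or> (\<exists>z\<in>ZA r R p n a. sqrt p * sqrt (\<Sum>i\<in>{i\<in>{1..n}. p / R^2 \<le> real i}. (a i)^2) \<le> z)"
proof -
  define T where "T = {i\<in>{1..n}. p / R^2 \<le> real i}"
  define Lt where "Lt = sqrt (\<Sum>i\<in>T. (a i)^2)"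
  define hs where "hs = (\<Sum>i\<in>{i\<in>{1..n}. real i \<le> p / R powr r}. a i)"
  define m where "m = p / R^2"
  have R2: "0 < R^2" using R1 by simp
  have m1: "1 < m" unfolding m_def using Rp R2 by (simp add: field_simps)
  show ?thesis
  proof (cases "T = {}")
    case True
    then show ?thesis using W0 unfolding T_def[symmetric] by force
  next
    case False
    then obtain i0 where i0: "i0 \<in> T" by auto
    define N where "N = nat \<lceil>m\<rceil>"
    have NT: "N \<le> i" if "i \<in> T" for i
    proof -
      have "m \<le> real i" using that unfolding T_def m_def by auto
      then have "\<lceil>m\<rceil> \<le> int i" by (simp add: ceiling_le_iff)
      then show ?thesis unfolding N_def by linarith
    qed
    have N1: "1 \<le> N" unfolding N_def using m1 by linarith
    have Nn: "N \<le> n" using NT[OF i0] i0 unfolding T_def by auto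
    have aN: "\<forall>i\<in>T. a i \<le> a N" using NT N1 unfolding T_def by (auto intro: a_le)
    have aN0: "0 \<le> a N" using N1 Nn a_nonneg by auto
    show ?thesis
    proof (cases "sqrt p * a N \<le> R * Lt")
      case True
      have "\<forall>i\<in>T. sqrt p * a i \<le> R * sqrt (\<Sum>i\<in>T. (a i)^2)"
      proof
        fix i assume "i \<in> T"
        then have "sqrt p * a i \<le> sqrt p * a N" using aN p1 by (intro mult_left_mono) auto
        then show "sqrt p * a i \<le> R * sqrt (\<Sum>i\<in>T. (a i)^2)" using True unfolding Lt_def by simp
      qed
      then have "\<exists>z\<in>ZA r R p n a. sqrt p * sqrt (\<Sum>i\<in>T. (a i)^2) \<le> z"
        by (intro W2gen) (auto simp: T_def)
      then show ?thesis unfolding T_def by blast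
    next
      case False
      define fm where "fm = nat \<lfloor>m\<rfloor>"
      have fl1: "(1::int) \<le> \<lfloor>m\<rfloor>" using m1 by (simp add: le_floor_iff)
      have fm1: "1 \<le> fm" using fl1 unfolding fm_def by linarith
      have fmm: "real fm \<le> m" unfolding fm_def using m1 by linarith
      have m2: "m \<le> 2 * real fm" unfolding fm_def using m1 fl1 by linarith
      have fmN: "fm \<le> N" unfolding fm_def N_def by (simp add: nat_mono floor_le_ceiling)
      have mx: "m \<le> p / R powr r" unfolding m_def using Rr_le_R2 R1 p1 by (intro divide_left_mono) auto
      have "real fm * a N = (\<Sum>j=1..fm. a N)" by simp
      also have "\<dots> \<le> (\<Sum>j=1..fm. a j)" using fmN Nn by (intro sum_mono a_le) auto
      also have "\<dots> \<le> hs" unfolding hs_def using fm1 fmm mx fmN Nn by (intro head_ge) auto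
      finally have fmh: "real fm * a N \<le> hs" .
      have Lt0: "0 \<le> Lt" unfolding Lt_def by (simp add: sum_nonneg)
      have sp: "sqrt p * sqrt p = p" using p1 by simp
      have "R * (sqrt p * Lt) = sqrt p * (R * Lt)" by (simp add: mult_ac)
      also have "\<dots> \<le> sqrt p * (sqrt p * a N)" using False p1 by (intro mult_left_mono) auto
      also have "\<dots> = p * a N" using sp by (simp add: mult.assoc[symmetric])
      also have "\<dots> = R^2 * m * a N" unfolding m_def using R2 by simp
      also have "\<dots> \<le> R^2 * (2 * real fm) * a N" using m2 aN0 R2 by (intro mult_right_mono mult_left_mono) auto
      also have "\<dots> = R * (2 * R * (real fm * a N))" by (simp add: power2_eq_square mult_ac)
      also have "\<dots> \<le> R * (2 * R * hs)" using fmh R1 by (intro mult_left_mono) auto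
      finally have "sqrt p * Lt \<le> 2 * R * hs" using R1 by simp
      then show ?thesis unfolding Lt_def T_def hs_def by blast
    qed
  qed
qed

lemma main_bound:
  "let S = SA4 r R p n a;
       M = (if p \<le> R powr r then
              sqrt p * sqrt (\<Sum>i=1..n. (a i)^2) + p powr (1/r) * a 1
            else if p \<le> R^2 then
              sqrt p * sqrt (\<Sum>i=1..n. (a i)^2)
                + R * (\<Sum>i\<in>{i\<in>{1..n}. real i \<le> p / R powr r}. a i)
            else
              sqrt p * sqrt (\<Sum>i\<in>{i\<in>{1..n}. p / R^2 \<le> real i}. (a i)^2)
                + R * (\<Sum>i\<in>{i\<in>{1..n}. real i \<le> p / R powr r}. a i))
   in M / 4 \<le> S \<and> S \<le> 4 * M"
proof -
  define L where "L = sqrt (\<Sum>i=1..n. (a i)^2)"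
  define Lt where "Lt = sqrt (\<Sum>i\<in>{i\<in>{1..n}. p / R^2 \<le> real i}. (a i)^2)"
  define hs where "hs = (\<Sum>i\<in>{i\<in>{1..n}. real i \<le> p / R powr r}. a i)"
  define M where "M = (if p \<le> R powr r then sqrt p * L + p powr (1/r) * a 1
            else if p \<le> R^2 then sqrt p * L + R * hs else sqrt p * Lt + R * hs)"
  define Z where "Z = ZA r R p n a"
  have cR: "\<And>t. ((\<Sum>i=1..n. fA4 r R (t i)) \<le> ereal p) \<longleftrightarrow>
         ((\<forall>i\<in>{1..n}. \<bar>t i\<bar> \<le> R) \<and> (\<Sum>i=1..n. gA r (t i)) \<le> p)"
    using R1 by (intro constraint_iff) auto
  have SZ: "SA4 r R p n a = Sup Z" unfolding SA4_def Z_def ZA_def cR ..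
  have L0: "0 \<le> L" unfolding L_def by (simp add: sum_nonneg)
  have Lt0: "0 \<le> Lt" unfolding Lt_def by (simp add: sum_nonneg)
  have hs0: "0 \<le> hs" unfolding hs_def using a_nonneg by (intro sum_nonneg) auto
  have a10: "0 \<le> a 1" using a_nonneg n1 by auto
  have sp0: "0 \<le> sqrt p" using p1 by simp
  have q0: "0 \<le> p powr (1/r)" by simp
  have M0: "0 \<le> M" unfolding M_def using L0 Lt0 hs0 a10 sp0 q0 R1 by auto
  have up: "z \<le> 4 * M" if z: "z \<in> Z" for z
  proof -
    obtain t where zt: "z = (\<Sum>i=1..n. a i * t i)" and v1: "\<forall>i\<in>{1..n}. \<bar>t i\<bar> \<le> R"
      and v2: "(\<Sum>i=1..n. gA r (t i)) \<le> p" using z unfolding Z_def ZA_def by blast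
    show ?thesis
    proof (cases "p \<le> R powr r")
      case True
      then show ?thesis using upper1[OF v1 v2] M0 unfolding zt M_def L_def by simp
    next
      case c1: False
      show ?thesis
      proof (cases "p \<le> R^2")
        case True
        have u: "z \<le> sqrt p * L + 3 * R * hs" using c1 upper2[OF _ v1 v2] unfolding zt L_def hs_def by simp
        have "0 \<le> sqrt p * L" "0 \<le> R * hs" using sp0 L0 hs0 R1 by auto
        then show ?thesis using u True c1 unfolding M_def by simp
      next
        case False
        have u: "z \<le> sqrt p * Lt + 4 * R * hs" using False upper3[OF _ v1 v2] unfolding zt Lt_def hs_def by simp
        have "0 \<le> sqrt p * Lt" "0 \<le> R * hs" using sp0 Lt0 hs0 R1 by auto
        then show ?thesis using u False c1 unfolding M_def by simp
      qed
    qed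
  qed
  have ne: "Z \<noteq> {}" using W0 unfolding Z_def by blast
  have bdd: "bdd_above Z" using up by (intro bdd_aboveI) blast
  have Sup_up: "Sup Z \<le> 4 * M" using ne up by (intro cSup_least) auto
  have lo: "z \<le> Sup Z" if "z \<in> Z" for z using bdd that by (rule cSup_upper[rotated])
  have lo2: "w \<le> Sup Z" if "\<exists>z\<in>Z. w \<le> z" for w using that lo by force
  have S0: "0 \<le> Sup Z" using lo W0 unfolding Z_def by blast
  have "M \<le> 4 * Sup Z"
  proof (cases "p \<le> R powr r")
    case True
    have "p \<le> R^2" using True Rr_le_R2 by linarith
    then have "sqrt p * L \<le> Sup Z" using W2 lo2 unfolding L_def Z_def by blast
    moreover have "p powr (1/r) * a 1 \<le> Sup Z" using W1[OF True] lo unfolding Z_def by blast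
    ultimately show ?thesis using True S0 unfolding M_def by simp
  next
    case c1: False
    have h: "R * hs \<le> Sup Z" using W3 lo unfolding hs_def Z_def by blast
    show ?thesis
    proof (cases "p \<le> R^2")
      case True
      then have "sqrt p * L \<le> Sup Z" using W2 lo2 unfolding L_def Z_def by blast
      then show ?thesis using True c1 h S0 unfolding M_def by simp
    next
      case False
      then have "sqrt p * Lt \<le> 2 * R * hs \<or> sqrt p * Lt \<le> Sup Z"
        using W4[of] lo2 unfolding Lt_def hs_def Z_def by (meson not_le)
      then have "sqrt p * Lt \<le> 2 * Sup Z" using h S0 by auto
      then show ?thesis using False c1 h S0 unfolding M_def by simp
    qed
  qed
  then show ?thesis using Sup_up unfolding Let_def SZ M_def L_def Lt_def hs_def by simp
qed

end

theorem lemmaA4: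
  "\<exists>C>0. \<forall>(r::real) (R::real) (p::real) (n::nat) (a::nat \<Rightarrow> real).
     0 < r \<and> r \<le> 1 \<and> 1 < R \<and> 1 \<le> p \<and> 1 \<le> n \<and>
     (\<forall>i j. 1 \<le> i \<longrightarrow> i \<le> j \<longrightarrow> j \<le> n \<longrightarrow> a j \<le> a i) \<and> 0 \<le> a n \<longrightarrow>
     (let S = SA4 r R p n a;
          M = (if p \<le> R powr r then
                 sqrt p * sqrt (\<Sum>i=1..n. (a i)^2) + p powr (1/r) * a 1
               else if p \<le> R^2 then
                 sqrt p * sqrt (\<Sum>i=1..n. (a i)^2)
                   + R * (\<Sum>i\<in>{i\<in>{1..n}. real i \<le> p / R powr r}. a i)
               else
                 sqrt p * sqrt (\<Sum>i\<in>{i\<in>{1..n}. p / R^2 \<le> real i}. (a i)^2)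
                   + R * (\<Sum>i\<in>{i\<in>{1..n}. real i \<le> p / R powr r}. a i))
      in M / C \<le> S \<and> S \<le> C * M)"
proof (intro exI[of _ "4::real"] conjI allI impI)
  show "(0::real) < 4" by simp
next
  fix r R p :: real and n :: nat and a :: "nat \<Rightarrow> real"
  assume H: "0 < r \<and> r \<le> 1 \<and> 1 < R \<and> 1 \<le> p \<and> 1 \<le> n \<and>
     (\<forall>i j. 1 \<le> i \<longrightarrow> i \<le> j \<longrightarrow> j \<le> n \<longrightarrow> a j \<le> a i) \<and> 0 \<le> a n"
  then show "let S = SA4 r R p n a;
          M = (if p \<le> R powr r then
                 sqrt p * sqrt (\<Sum>i=1..n. (a i)^2) + p powr (1/r) * a 1
               else if p \<le> R^2 then
                 sqrt p * sqrt (\<Sum>i=1..n. (a i)^2)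
                   + R * (\<Sum>i\<in>{i\<in>{1..n}. real i \<le> p / R powr r}. a i)
               else
                 sqrt p * sqrt (\<Sum>i\<in>{i\<in>{1..n}. p / R^2 \<le> real i}. (a i)^2)
                   + R * (\<Sum>i\<in>{i\<in>{1..n}. real i \<le> p / R powr r}. a i))
      in M / 4 \<le> S \<and> S \<le> 4 * M"
    using main_bound[of r R p n a] by blast
qed

end
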